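(* Let $P(X,Y,Z)=X+\frac{1}{X}+Y+\frac{1}{Y}+Z+\frac{1}{Z}-2$ and let $D_P=\{(X,Y,Z)\in(\mathbb{C}^\times)^3 : P(X,Y,Z)=0,\ |X|=|Y|=1,\ |Z|>1\}$. Then \[ D_P=\{(e^{i\phi},e^{i\psi},Z(\phi,\psi)) : \cos\phi+\cos\psi<0\},\quad Z(\phi,\psi)=1-\cos\phi-\cos\psi+\sqrt{(1-\cos\phi-\cos\psi)^2-1}. \] *)

theory Defs
  imports "HOL-Analysis.Analysis"
begin

definition Ppoly :: "complex \<Rightarrow> complex \<Rightarrow> complex \<Rightarrow> complex" where
  "Ppoly X Y Z = X + 1 / X + Y + 1 / Y + Z + 1 / Z - 2"

definition D_P :: "(complex \<times> complex \<times> complex) set" where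
  "D_P = {(X, Y, Z). X \<noteq> 0 \<and> Y \<noteq> 0 \<and> Z \<noteq> 0 \<and> Ppoly X Y Z = 0
            \<and> norm X = 1 \<and> norm Y = 1 \<and> norm Z > 1}"

definition Zfun :: "real \<Rightarrow> real \<Rightarrow> real" where
  "Zfun \<phi> \<psi> = 1 - cos \<phi> - cos \<psi> + sqrt ((1 - cos \<phi> - cos \<psi>)\<^sup>2 - 1)"

end

theory Submission
  imports Defs
begin

lemma cis_plus_inv: "cis p + 1 / cis p = complex_of_real (2 * cos p)"
  by (simp add: complex_eq_iff divide_complex_def cis_inverse[symmetric] del: cis_inverse)

lemma P_rearr: "Ppoly X Y Z = 0 \<Longrightarrow> Z + 1/Z = 2 - (X + 1/X) - (Y + 1/Y)"
  unfolding Ppoly_def by (simp add: algebra_simps)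

lemma real_sol:
  fixes z a :: real
  assumes "\<bar>z\<bar> > 1" "z + 1/z = 2*a" "a \<ge> -1"
  shows "a > 1 \<and> z = a + sqrt (a\<^sup>2 - 1)"
proof -
  have z0: "z \<noteq> 0" using assms by auto
  have q: "z*z + 1 = 2*a*z" using assms(2) z0 by (simp add: field_simps)
  have zpos: "z > 1"
  proof (rule ccontr)
    assume "\<not> z > 1"
    then have zn: "z < -1" using assms(1) by auto
    then have "(z+1)^2 > 0" by simp
    then have "z*z + 1 > -2*z" by (simp add: power2_eq_square algebra_simps)
    then have "(a + 1) * z > 0" using q by (simp add: algebra_simps)
    then have "a + 1 < 0" using zn by (simp add: zero_less_mult_iff)
    then show False using assms(3) by simp
  qed
  have "(z-1)^2 > 0" using zpos by simp
  then have "z*z + 1 > 2*z" by (simp add: power2_eq_square algebra_simps)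
  then have "(a - 1) * z > 0" using q by (simp add: algebra_simps)
  then have a1: "a > 1" using zpos by (simp add: zero_less_mult_iff)
  have "(z-a)^2 = a^2 - 1" using q by (simp add: power2_eq_square algebra_simps)
  moreover have "z - a \<ge> 0"
  proof -
    have "1*1 \<le> z*z" using zpos by (intro mult_mono) auto
    then have "z*z \<ge> 1" by simp
    then have "(z - a) * z \<ge> 0" using q by (simp add: algebra_simps)
    then show ?thesis using zpos by (simp add: zero_le_mult_iff)
  qed
  ultimately have "z - a = sqrt (a^2 - 1)" by (metis real_sqrt_abs abs_of_nonneg)
  then show ?thesis using a1 by simp
qed

theorem lemma2p2:
  shows "D_P = {(cis \<phi>, cis \<psi>, complex_of_real (Zfun \<phi> \<psi>)) | \<phi> \<psi>. cos \<phi> + cos \<psi> < 0}"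
proof (rule set_eqI, rule iffI)
  fix t assume "t \<in> D_P"
  then obtain X Y Z where t: "t = (X,Y,Z)" and X0: "X \<noteq> 0" and Y0: "Y \<noteq> 0" and Z0: "Z \<noteq> 0"
    and P: "Ppoly X Y Z = 0" and nX: "norm X = 1" and nY: "norm Y = 1" and nZ: "norm Z > 1"
    unfolding D_P_def by auto
  define p :: real where "p = Arg X"
  define q :: real where "q = Arg Y"
  have Xc: "X = cis p" using rcis_cmod_Arg[of X] nX by (simp add: rcis_def p_def)
  have Yc: "Y = cis q" using rcis_cmod_Arg[of Y] nY by (simp add: rcis_def q_def)
  define a where "a = 1 - cos p - cos q"
  have "Z + 1/Z = 2 - complex_of_real (2 * cos p) - complex_of_real (2 * cos q)"
    using P_rearr[OF P] unfolding Xc Yc cis_plus_inv .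
  then have ZZ: "Z + 1/Z = complex_of_real (2*a)"
    unfolding a_def by simp
  have "Im (Z + 1/Z) = Im Z * (1 - 1 / (norm Z)^2)"
    by (simp add: Im_divide cmod_def algebra_simps)
  then have "Im Z * (1 - 1 / (norm Z)^2) = 0" using ZZ by simp
  moreover have "(norm Z)^2 > 1" using nZ by (simp add: one_less_power)
  ultimately have ImZ: "Im Z = 0" by auto
  define z where "z = Re Z"
  have Zr: "Z = complex_of_real z" unfolding z_def using ImZ by (simp add: complex_eq_iff)
  have "complex_of_real (z + 1/z) = complex_of_real (2*a)" using ZZ unfolding Zr by simp
  then have "z + 1/z = 2*a" by (simp only: of_real_eq_iff)
  moreover have "\<bar>z\<bar> > 1" using nZ Zr by simp
  moreover have "a \<ge> -1" unfolding a_def using cos_le_one[of p] cos_le_one[of q] by linarith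
  ultimately have "a > 1 \<and> z = a + sqrt (a\<^sup>2 - 1)" using real_sol by blast
  then have "cos p + cos q < 0" "z = Zfun p q" unfolding a_def Zfun_def by auto
  then show "t \<in> {(cis \<phi>, cis \<psi>, complex_of_real (Zfun \<phi> \<psi>)) | \<phi> \<psi>. cos \<phi> + cos \<psi> < 0}"
    using t Xc Yc Zr by blast
next
  fix t assume "t \<in> {(cis \<phi>, cis \<psi>, complex_of_real (Zfun \<phi> \<psi>)) | \<phi> \<psi>. cos \<phi> + cos \<psi> < 0}"
  then obtain p q where t: "t = (cis p, cis q, complex_of_real (Zfun p q))" and c: "cos p + cos q < 0"
    by blast
  define a where "a = 1 - cos p - cos q"
  define s where "s = sqrt (a^2 - 1)"
  have a1: "a > 1" using c a_def by simp
  have s0: "s \<ge> 0" unfolding s_def using a1 by simp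
  have "a^2 \<ge> 1" using a1 by (simp add: one_le_power)
  then have ss: "s * s = a^2 - 1" unfolding s_def by simp
  have Zf: "Zfun p q = a + s" unfolding Zfun_def a_def s_def by simp
  have zi: "1 / (a + s) = a - s" using ss a1 s0
    by (simp add: field_simps power2_eq_square)
  have "complex_of_real (a+s) + 1 / complex_of_real (a+s) = complex_of_real ((a+s) + 1/(a+s))"
    by simp
  also have "\<dots> = complex_of_real (2*a)" using zi by simp
  finally have e: "complex_of_real (a+s) + 1 / complex_of_real (a+s) = complex_of_real (2*a)" .
  have "Ppoly (cis p) (cis q) (complex_of_real (a+s)) = 0"
  proof -
    have "Ppoly (cis p) (cis q) (complex_of_real (a+s)) =
      (cis p + 1 / cis p) + (cis q + 1 / cis q) + (complex_of_real (a+s) + 1 / complex_of_real (a+s)) - 2"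
      unfolding Ppoly_def by (simp add: algebra_simps)
    also have "\<dots> = complex_of_real (2 * cos p + 2 * cos q + 2 * a - 2)"
      unfolding cis_plus_inv e by simp
    also have "\<dots> = 0" unfolding a_def by simp
    finally show ?thesis .
  qed
  moreover have "a + s > 1" using a1 s0 by simp
  moreover have "norm (complex_of_real (a+s)) > 1" using a1 s0 by (simp only: norm_of_real)
  moreover have "complex_of_real (a+s) \<noteq> 0" using a1 s0 by (simp only: of_real_eq_0_iff)
  ultimately show "t \<in> D_P" unfolding D_P_def t Zf by (simp del: of_real_add)
qed

end
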